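(* For $z\in\mathbb R$ let \[p_1(z)=-7+30z-24z^2-14z^3+12z^4-6z^5+2z^6,\] \[p_2(z)=81-324z+1188z^2-1404z^3-216z^4+1404z^5-972z^6+432z^7-108z^8,\] \[\mathcal Q(z)=\frac13(z^2-z+1)-\frac{\sqrt[3]{2}\,(3-(z^2-z+1)^2)}{3\sqrt[3]{p_1(z)+\sqrt{p_2(z)}}}+\frac{\sqrt[3]{p_1(z)+\sqrt{p_2(z)}}}{3\sqrt[3]{2}}.\] If $v\in(0.35,1/2)$, then $\mathcal Q(v)<4v/5$. If $v\in[0.22,0.35]$, then $\mathcal Q(v)<9v/10$. *)

theory Defs
  imports Complex_Main
begin

definition p1 :: "real \<Rightarrow> real" where
  "p1 z = -7 + 30*z - 24*z^2 - 14*z^3 + 12*z^4 - 6*z^5 + 2*z^6"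

definition p2 :: "real \<Rightarrow> real" where
  "p2 z = 81 - 324*z + 1188*z^2 - 1404*z^3 - 216*z^4 + 1404*z^5 - 972*z^6 + 432*z^7 - 108*z^8"

definition Q :: "real \<Rightarrow> real" where
  "Q z = (1/3) * (z^2 - z + 1)
        - (root 3 2 * (3 - (z^2 - z + 1)^2)) / (3 * root 3 (p1 z + sqrt (p2 z)))
        + root 3 (p1 z + sqrt (p2 z)) / (3 * root 3 2)"

end

theory Submission
  imports Defs
begin

lemma cubic_mono:
  fixes b y Y p :: real
  assumes "b > 0" "y^3 + 3*b*y = p" "Y^3 + 3*b*Y > p"
  shows "y < Y"
proof (rule ccontr)
  assume "\<not> y < Y"
  hence d: "y - Y \<ge> 0" by simp
  have e: "y^2 + y*Y + Y^2 + 3*b = (y + Y/2)^2 + 3/4*Y^2 + 3*b"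
    by (simp add: algebra_simps power2_eq_square)
  have "y^2 + y*Y + Y^2 + 3*b \<ge> 0"
    unfolding e using assms(1) by (simp add: add_nonneg_nonneg)
  hence "(y - Y) * (y^2 + y*Y + Y^2 + 3*b) \<ge> 0" using d by simp
  moreover have "(y - Y) * (y^2 + y*Y + Y^2 + 3*b) = (y^3 + 3*b*y) - (Y^3 + 3*b*Y)"
    by (simp add: algebra_simps power2_eq_square power3_eq_cube)
  ultimately show False using assms by linarith
qed

lemma Q_cubic:
  fixes v :: real
  defines "a \<equiv> v^2 - v + 1"
  assumes b: "3 - a^2 > 0"
  shows "\<exists>y. Q v = (a + y)/3 \<and> y^3 + 3*(3 - a^2)*y = p1 v"
proof -
  define b where "b = 3 - a^2"
  have bpos: "b > 0" using b b_def by simp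
  have p2eq: "p2 v = (p1 v)^2 + 4*b^3"
    unfolding p1_def p2_def b_def a_def by algebra
  define s where "s = sqrt (p2 v)"
  have p2pos: "p2 v > (p1 v)^2" using p2eq bpos by simp
  have p2nn: "p2 v \<ge> 0" using p2pos by (smt (verit) zero_le_power2)
  have s2: "s^2 = p2 v" unfolding s_def using p2nn by simp
  have sge: "s \<ge> 0" unfolding s_def using p2nn by simp
  have "s > \<bar>p1 v\<bar>"
  proof (rule ccontr)
    assume "\<not> s > \<bar>p1 v\<bar>"
    hence "s^2 \<le> (\<bar>p1 v\<bar>)^2" using sge by (intro power_mono) auto
    thus False using s2 p2pos by simp
  qed
  hence Xpos: "p1 v + s > 0" by linarith
  define X where "X = p1 v + s"
  define t where "t = root 3 X"
  define c where "c = root 3 (2::real)"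
  have t3: "t^3 = X" unfolding t_def using Xpos X_def by (simp add: real_root_pow_pos)
  have tpos: "t > 0" unfolding t_def using Xpos X_def by simp
  have c3: "c^3 = 2" unfolding c_def by (simp add: real_root_pow_pos)
  have cpos: "c > 0" unfolding c_def by simp
  define u where "u = t / c"
  define w where "w = c * b / t"
  have uw: "u * w = b" unfolding u_def w_def using tpos cpos by simp
  have u3: "u^3 = X/2" unfolding u_def using c3 t3 by (simp add: power_divide)
  have "w^3 = 2*b^3/X" unfolding w_def using c3 t3 by (simp add: power_divide power_mult_distrib)
  also have "... = -(p1 v - s)/2"
  proof -
    have "X * (-(p1 v - s)) = 4*b^3" unfolding X_def using s2 p2eq
      by (simp add: algebra_simps power2_eq_square)
    thus ?thesis using Xpos X_def by (simp add: field_simps)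
  qed
  finally have w3: "w^3 = -(p1 v - s)/2" .
  define y where "y = u - w"
  have "y^3 + 3*b*y = u^3 - w^3 - 3*(u*w)*(u-w) + 3*b*y"
    unfolding y_def by (simp add: algebra_simps power3_eq_cube)
  also have "... = p1 v" using uw u3 w3 X_def y_def by simp
  finally have ycub: "y^3 + 3*b*y = p1 v" .
  have Qe: "Q v = a/3 - c*b/(3*t) + t/(3*c)"
    unfolding Q_def a_def b_def c_def t_def X_def s_def by simp
  have "Q v = (a + y)/3"
    unfolding Qe y_def u_def w_def using tpos cpos by (simp add: field_simps)
  thus ?thesis using ycub b_def by blast
qed

lemma poly1:
  fixes v :: real
  assumes "0.35 < v" "v < 1/2"
  shows "(12/5*v - (v^2 - v + 1))^3 + 3*(3 - (v^2 - v + 1)^2)*(12/5*v - (v^2 - v + 1)) > p1 v"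
proof -
  have e: "(12/5*v - (v^2 - v + 1))^3 + 3*(3 - (v^2 - v + 1)^2)*(12/5*v - (v^2 - v + 1)) - p1 v
        = v * ((-675 + 1215*v + 3888*v^2 - 2160*v^3)/125)"
    unfolding p1_def by algebra
  have v0: "v > 0" using assms by simp
  have a1: "v^3 \<le> (1/2)*v^2" using assms v0 by (simp add: power3_eq_cube power2_eq_square)
  have a2: "v^2 \<ge> 0.35*v" using assms v0 by (simp add: power2_eq_square)
  have a3: "v > 7/20" "v^2 \<ge> 7/20*v" using assms a2 by simp_all
  have "-675 + 1215*v + 3888*v^2 - 2160*v^3 > 0" using a1 a3 by linarith
  hence "v * ((-675 + 1215*v + 3888*v^2 - 2160*v^3)/125) > 0" using v0 by simp
  thus ?thesis using e by linarith
qed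

lemma poly2:
  fixes v :: real
  assumes "0.22 \<le> v" "v \<le> 0.35"
  shows "(27/10*v - (v^2 - v + 1))^3 + 3*(3 - (v^2 - v + 1)^2)*(27/10*v - (v^2 - v + 1)) > p1 v"
proof -
  have e: "(27/10*v - (v^2 - v + 1))^3 + 3*(3 - (v^2 - v + 1)^2)*(27/10*v - (v^2 - v + 1)) - p1 v
        = v * ((-2700 + 5130*v + 41553*v^2 - 21870*v^3)/1000)"
    unfolding p1_def by algebra
  have v0: "v > 0" using assms by simp
  have a1: "v^3 \<le> 0.35*v^2" using assms v0 by (simp add: power3_eq_cube power2_eq_square)
  have a2: "v^2 \<ge> 0.22*v" using assms v0 by (simp add: power2_eq_square)
  have a3: "v \<ge> 11/50" "v^2 \<ge> 11/50*v" "v^3 \<le> 7/20*v^2" using assms a2 a1 by simp_all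
  have "-2700 + 5130*v + 41553*v^2 - 21870*v^3 > 0" using a3 by linarith
  hence "v * ((-2700 + 5130*v + 41553*v^2 - 21870*v^3)/1000) > 0" using v0 by simp
  thus ?thesis using e by linarith
qed

lemma Q_bound:
  fixes v k :: real
  assumes "0 < v" "v < 1"
    and h: "(3*k*v - (v^2 - v + 1))^3 + 3*(3 - (v^2 - v + 1)^2)*(3*k*v - (v^2 - v + 1)) > p1 v"
  shows "Q v < k*v"
proof -
  have a0: "v^2 - v + 1 > 0" using assms by (smt (verit) power2_eq_square mult_pos_pos)
  have a1: "v^2 - v + 1 \<le> 1" using assms by (simp add: power2_eq_square mult_le_cancel_left1)
  have "(v^2 - v + 1)^2 \<le> 1" using a0 a1 by (simp add: power_le_one)
  hence b: "3 - (v^2 - v + 1)^2 > 0" by linarith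
  obtain y where y: "Q v = ((v^2 - v + 1) + y)/3" "y^3 + 3*(3 - (v^2 - v + 1)^2)*y = p1 v"
    using Q_cubic[OF b] by blast
  have "y < 3*k*v - (v^2 - v + 1)"
    by (rule cubic_mono[OF b y(2) h])
  thus ?thesis using y(1) by simp
qed

theorem lemma4p3:
  shows "(\<forall>v::real. 0.35 < v \<and> v < 1/2 \<longrightarrow> Q v < 4*v/5)
       \<and> (\<forall>v::real. 0.22 \<le> v \<and> v \<le> 0.35 \<longrightarrow> Q v < 9*v/10)"
proof (intro conjI allI impI)
  fix v :: real
  assume "0.35 < v \<and> v < 1/2"
  hence "Q v < (4/5)*v" using Q_bound[of v "4/5"] poly1[of v] by simp
  thus "Q v < 4*v/5" by simp
next
  fix v :: real
  assume "0.22 \<le> v \<and> v \<le> 0.35"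
  hence "Q v < (9/10)*v" using Q_bound[of v "9/10"] poly2[of v] by simp
  thus "Q v < 9*v/10" by simp
qed

end
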